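(* For every $x\in P$ (the poset defined below) there is a sequence $(x_i)_{i<\omega}$ in $P$ such that either $x_i<x_j$ for all $j<i<\omega$ and $x$ is the greatest lower bound of $\{x_i: i<\omega\}$ in $P$, or $x_i<x_j$ for all $i<j<\omega$ and $x$ is the least upper bound of $\{x_i:i<\omega\}$ in $P$.
   Context: Let $P=\{p\}\cup\{p_{i_0,\ldots,i_n}: 0\le n<\omega,\ i_0,\ldots,i_n\in\omega\}$ (all these symbols distinct). Let $\le$ be the reflexive–transitive closure of the following strict relations: (0) for all $0\le j<i<\omega$: $p<p_i<p_j$; (E) for all $r\ge 0$, all $i_0,\ldots,i_{2r}\in\omega$, all $k\le i_{2r}$ and all $i<j<\omega$: $p_{i_0,\ldots,i_{2r},i}<p_{i_0,\ldots,i_{2r},j}<p_{i_0,\ldots,i_{2r-1},k}$ (for $r=0$ the last element is $p_k$); (O) for all $r\ge0$, all $i_0,\ldots,i_{2r+1}\in\omega$, all $k\le i_{2r+1}$ and all $j<i<\omega$: $p_{i_0,\ldots,i_{2r},k}<p_{i_0,\ldots,i_{2r+1},i}<p_{i_0,\ldots,i_{2r+1},j}$. This $\le$ is a partial order. *)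

theory Defs
  imports Main
begin

text \<open>Elements of P are encoded as lists of naturals: the empty list is p,
  and the nonempty list [i0,...,in] is p_{i0,...,in}.\<close>

definition gen :: "nat list \<Rightarrow> nat list \<Rightarrow> bool" where
  "gen x y \<longleftrightarrow>
     \<comment> \<open>(0): for j < i, p < p_i < p_j\<close>
     (\<exists>i j. j < i \<and> ((x = [] \<and> y = [i]) \<or> (x = [i] \<and> y = [j])))
   \<or> \<comment> \<open>(E): s = i_0..i_{2r}, k \<le> i_{2r}, i < j: s@[i] < s@[j] < butlast s @ [k]\<close>
     (\<exists>s i j k. odd (length s) \<and> k \<le> last s \<and> i < j \<and>
        ((x = s @ [i] \<and> y = s @ [j]) \<or> (x = s @ [j] \<and> y = butlast s @ [k])))
   \<or> \<comment> \<open>(O): s = i_0..i_{2r+1}, k \<le> i_{2r+1}, j < i: butlast s @ [k] < s@[i] < s@[j]\<close>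
     (\<exists>s i j k. even (length s) \<and> s \<noteq> [] \<and> k \<le> last s \<and> j < i \<and>
        ((x = butlast s @ [k] \<and> y = s @ [i]) \<or> (x = s @ [i] \<and> y = s @ [j])))"

definition Ple :: "nat list \<Rightarrow> nat list \<Rightarrow> bool" where
  "Ple = gen\<^sup>*\<^sup>*"

definition Pless :: "nat list \<Rightarrow> nat list \<Rightarrow> bool" where
  "Pless x y \<longleftrightarrow> Ple x y \<and> x \<noteq> y"

definition P_glb :: "nat list \<Rightarrow> nat list set \<Rightarrow> bool" where
  "P_glb x A \<longleftrightarrow> (\<forall>a\<in>A. Ple x a) \<and> (\<forall>z. (\<forall>a\<in>A. Ple z a) \<longrightarrow> Ple z x)"

definition P_lub :: "nat list \<Rightarrow> nat list set \<Rightarrow> bool" where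
  "P_lub x A \<longleftrightarrow> (\<forall>a\<in>A. Ple a x) \<and> (\<forall>z. (\<forall>a\<in>A. Ple a z) \<longrightarrow> Ple x z)"

end

theory Submission imports Defs begin

lemma app_split: "s @ [i] = (x::nat list) @ m # w \<Longrightarrow> (w = [] \<and> s = x \<and> i = m) \<or> (w \<noteq> [] \<and> s = x @ m # butlast w \<and> i = last w)"
  by (cases w rule: rev_cases) auto

lemma gen_step: "j < i \<Longrightarrow> s \<noteq> [] \<Longrightarrow> even (length s) \<Longrightarrow> gen (s@[i]) (s@[j])"
  unfolding gen_def by blast

lemma odd_up: "odd (length x) \<Longrightarrow> k \<le> last x \<Longrightarrow> Ple x (butlast x @ [k])"
proof -
  assume o: "odd (length x)" and k: "k \<le> last x"
  have xne: "x \<noteq> []" using o by auto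
  show ?thesis
  proof (cases "k = last x")
    case True thus ?thesis using xne by (simp add: Ple_def)
  next
    case False
    hence lt: "k < last x" using k by simp
    have "gen x (butlast x @ [k])"
    proof (cases "butlast x = []")
      case True
      then have "x = [last x]" using xne by (metis append_butlast_last_id append_Nil)
      thus ?thesis unfolding gen_def using lt True by (metis self_append_conv2)
    next
      case False
      have "x = butlast x @ [last x]" using xne by simp
      moreover have "even (length (butlast x))" using o xne by simp
      ultimately show ?thesis using gen_step[OF lt False] by metis
    qed
    thus ?thesis by (simp add: Ple_def)
  qed
qed

lemma even_down: "even (length x) \<Longrightarrow> x \<noteq> [] \<Longrightarrow> k \<le> last x \<Longrightarrow> Ple (butlast x @ [k]) x"
proof -
  assume e: "even (length x)" and xne: "x \<noteq> []" and k: "k \<le> last x"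
  show ?thesis
  proof (cases "k = last x")
    case True thus ?thesis using xne by (simp add: Ple_def)
  next
    case False
    hence lt: "k < last x" using k by simp
    have o: "odd (length (butlast x))" using e xne by (cases x rule: rev_cases) auto
    have "gen (butlast x @ [k]) (butlast x @ [last x])"
      unfolding gen_def using o lt by blast
    thus ?thesis using xne by (simp add: Ple_def)
  qed
qed

lemma sib: "s@[i] = (x::nat list)@m#w \<Longrightarrow> n \<le> m \<Longrightarrow> (w=[] \<Longrightarrow> m \<le> j) \<Longrightarrow> \<exists>m' w'. n\<le>m' \<and> s@[j] = x@m'#w'"
proof (cases w rule: rev_cases)
  case Nil
  assume "s@[i] = x@m#w" "n \<le> m" "(w=[] \<Longrightarrow> m \<le> j)"
  thus ?thesis using Nil by auto
next
  case (snoc u a)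
  assume "s@[i] = x@m#w" "n \<le> m"
  then have "s = x@m#u" using snoc by (metis append_Cons append_assoc butlast_snoc)
  thus ?thesis using \<open>n \<le> m\<close> by auto
qed

lemma child: "t@[k] = (x::nat list)@m#w \<Longrightarrow> n \<le> m \<Longrightarrow> k \<le> l \<Longrightarrow> \<exists>m' w'. n \<le> m' \<and> t@[l,i] = x@m'#w'"
proof (cases w rule: rev_cases)
  case Nil
  assume "t@[k] = x@m#w" "n \<le> m" "k \<le> l"
  thus ?thesis using Nil by auto
next
  case (snoc u a)
  assume "t@[k] = x@m#w" "n \<le> m"
  then have "t = x@m#u" using snoc by (metis append_Cons append_assoc butlast_snoc)
  thus ?thesis using \<open>n \<le> m\<close> by auto
qed

lemma parent: "s@[j] = (x::nat list)@m#w \<Longrightarrow> n \<le> m \<Longrightarrow> length s \<noteq> Suc (length x) \<Longrightarrow> w \<noteq> [] \<Longrightarrow> \<exists>m' w'. n \<le> m' \<and> butlast s@[k] = x@m'#w'"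
proof (cases w rule: rev_cases)
  case Nil
  assume "w \<noteq> []" thus ?thesis using Nil by auto
next
  case (snoc u a)
  assume a: "s@[j] = x@m#w" "n \<le> m" "length s \<noteq> Suc (length x)"
  then have su: "s = x@m#u" using snoc by (metis append_Cons append_assoc butlast_snoc)
  then have "u \<noteq> []" using a(3) by auto
  then have "butlast s = x@m#butlast u" using su by (simp add: butlast_append)
  thus ?thesis using a(2) by auto
qed

lemma odd_step:
  assumes o: "odd (length x)" and g: "gen y z" and y: "y = x @ m # w" and nm: "n \<le> m"
  shows "Ple x z \<or> (\<exists>m' w'. n \<le> m' \<and> z = x @ m' # w')"
  using g unfolding gen_def
proof (elim disjE exE conjE)
  fix i j assume "j < i" "y = []" "z = [i]"
  thus ?thesis using y o by (cases x) auto
next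
  fix i j assume "j < i" "y = [i]" "z = [j]"
  thus ?thesis using y o by (cases x) auto
next
  fix s i j k assume os: "odd (length s)" "k \<le> last s" "i < j"
    and h: "y = s @ [i]" "z = s @ [j]"
  have "w = [] \<Longrightarrow> m \<le> j" using h y app_split[of s i x m w] \<open>i<j\<close> by auto
  then obtain m' w' where "n \<le> m'" "s@[j] = x@m'#w'" using sib[of s i x m w n j] h y nm by auto
  thus ?thesis using h by auto
next
  fix s i j k assume os: "odd (length s)" "k \<le> last s" "i < j"
    and h: "y = s @ [j]" "z = butlast s @ [k]"
  show ?thesis
  proof (cases "w = []")
    case True
    then have "s = x" using h y by simp
    thus ?thesis using h odd_up[OF o] os by auto
  next
    case False
    have "length s \<noteq> Suc (length x)" using os o by auto
    thus ?thesis using parent[of s j x m w n k] h y nm False by auto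
  qed
next
  fix s i j k assume es: "even (length s)" "s \<noteq> []" "k \<le> last s" "j < i"
    and h: "y = butlast s @ [k]" "z = s @ [i]"
  have "s = butlast s @ [last s]" using es by simp
  then have "z = butlast s @ [last s, i]" using h by (metis append.assoc append_Cons append_Nil)
  moreover obtain m' w' where "n \<le> m'" "butlast s @ [last s, i] = x@m'#w'" using child[of "butlast s" k x m w n "last s" i] h y nm es by auto
  ultimately show ?thesis by auto
next
  fix s i j k assume es: "even (length s)" "s \<noteq> []" "k \<le> last s" "j < i"
    and h: "y = s @ [i]" "z = s @ [j]"
  have "w \<noteq> []" using h y es o by auto
  thus ?thesis using sib[of s i x m w n j] h y nm by auto
qed

lemma even_step:
  assumes e: "even (length x)" and g: "gen z y" and y: "y = x @ m # w" and nm: "n \<le> m"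
  shows "Ple z x \<or> (\<exists>m' w'. n \<le> m' \<and> z = x @ m' # w')"
  using g unfolding gen_def
proof (elim disjE exE conjE)
  fix i j assume "j < i" "z = []" "y = [i]"
  thus ?thesis using y nm by (cases x) (auto simp: Ple_def)
next
  fix i j assume "j < i" "z = [i]" "y = [j]"
  thus ?thesis using y nm by (cases x) (auto simp: Ple_def)
next
  fix s i j k assume os: "odd (length s)" "k \<le> last s" "i < j"
    and h: "z = s @ [i]" "y = s @ [j]"
  have "w \<noteq> []" using h y os e by auto
  thus ?thesis using sib[of s j x m w n i] h y nm by auto
next
  fix s i j k assume os: "odd (length s)" "k \<le> last s" "i < j"
    and h: "z = s @ [j]" "y = butlast s @ [k]"
  have sne: "s \<noteq> []" using os by auto
  have "s = butlast s @ [last s]" using sne by simp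
  then have "z = butlast s @ [last s, j]" using h by (metis append.assoc append_Cons append_Nil)
  moreover obtain m' w' where "n \<le> m'" "butlast s @ [last s, j] = x@m'#w'" using child[of "butlast s" k x m w n "last s" j] h y nm os by auto
  ultimately show ?thesis by auto
next
  fix s i j k assume es: "even (length s)" "s \<noteq> []" "k \<le> last s" "j < i"
    and h: "z = butlast s @ [k]" "y = s @ [i]"
  show ?thesis
  proof (cases "w = []")
    case True
    then have "s = x" using h y by simp
    thus ?thesis using h even_down[OF e] es by auto
  next
    case False
    have "length s \<noteq> Suc (length x)" using es e by auto
    thus ?thesis using parent[of s i x m w n k] h y nm False by auto
  qed
next
  fix s i j k assume es: "even (length s)" "s \<noteq> []" "k \<le> last s" "j < i"
    and h: "z = s @ [i]" "y = s @ [j]"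
  have "w = [] \<Longrightarrow> m \<le> i" using h y app_split[of s j x m w] \<open>j<i\<close> by auto
  then obtain m' w' where "n \<le> m'" "s@[i] = x@m'#w'" using sib[of s j x m w n i] h y nm by auto
  thus ?thesis using h by auto
qed

lemma odd_inv: assumes o: "odd (length x)" and h: "Ple (x@[n]) z" shows "Ple x z \<or> (\<exists>m w. n \<le> m \<and> z = x@m#w)"
  using h unfolding Ple_def
proof (induction rule: rtranclp_induct)
  case base thus ?case by auto
next
  case (step y z)
  from step.IH show ?case
  proof
    assume "gen\<^sup>*\<^sup>* x y" thus ?thesis using step.hyps(2) by auto
  next
    assume "\<exists>m w. n \<le> m \<and> y = x@m#w"
    then obtain m w where "n \<le> m" "y = x@m#w" by blast
    thus ?thesis using odd_step[OF o step.hyps(2)] unfolding Ple_def by blast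
  qed
qed

lemma even_inv: assumes o: "even (length x)" and h: "Ple z (x@[n])" shows "Ple z x \<or> (\<exists>m w. n \<le> m \<and> z = x@m#w)"
  using h unfolding Ple_def
proof (induction rule: converse_rtranclp_induct)
  case base thus ?case by auto
next
  case (step z y)
  from step.IH show ?case
  proof
    assume "gen\<^sup>*\<^sup>* y x" thus ?thesis using step.hyps(1) by (meson converse_rtranclp_into_rtranclp)
  next
    assume "\<exists>m w. n \<le> m \<and> y = x@m#w"
    then obtain m w where "n \<le> m" "y = x@m#w" by blast
    thus ?thesis using even_step[OF o step.hyps(1)] unfolding Ple_def by blast
  qed
qed

lemma nth_app: "z = x@m#w \<Longrightarrow> z ! length x = m" by simp

theorem mainTheorem7:
  fixes x :: "nat list"
  shows "\<exists>xs :: nat \<Rightarrow> nat list.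
    ((\<forall>i j. j < i \<longrightarrow> Pless (xs i) (xs j)) \<and> P_glb x (range xs))
  \<or> ((\<forall>i j. i < j \<longrightarrow> Pless (xs i) (xs j)) \<and> P_lub x (range xs))"
proof (cases "odd (length x)")
  case True
  have xne: "x \<noteq> []" using True by auto
  have g1: "gen (x@[i]) (x@[j])" if "i < j" for i j
    unfolding gen_def
    apply (rule disjI2, rule disjI1)
    apply (rule exI[of _ x], rule exI[of _ i], rule exI[of _ j], rule exI[of _ "last x"])
    using True that by simp
  have g2: "gen (x@[Suc i]) x" for i
  proof -
    have "gen (x@[Suc i]) (butlast x @ [last x])" unfolding gen_def
      apply (rule disjI2, rule disjI1)
      apply (rule exI[of _ x], rule exI[of _ i], rule exI[of _ "Suc i"], rule exI[of _ "last x"])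
      using True by simp
    thus ?thesis using xne by simp
  qed
  have up: "Ple (x@[i]) x" for i
    using g1[of i "Suc i"] g2[of i] unfolding Ple_def by (meson lessI r_into_rtranclp rtranclp_trans)
  have H: "(\<forall>i j. i < j \<longrightarrow> Pless (x@[i]) (x@[j])) \<and> P_lub x (range (\<lambda>i. x@[i]))"
  proof (intro conjI allI impI)
    fix i j :: nat assume "i < j" thus "Pless (x@[i]) (x@[j])" using g1 unfolding Pless_def Ple_def by auto
  next
    show "P_lub x (range (\<lambda>i. x@[i]))" unfolding P_lub_def
    proof (intro conjI allI impI)
      show "\<forall>a\<in>range (\<lambda>i. x @ [i]). Ple a x" using up by auto
    next
      fix z assume a: "\<forall>a\<in>range (\<lambda>i. x @ [i]). Ple a z"
      have "Ple (x@[Suc (z ! length x)]) z" using a by auto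
      from odd_inv[OF True this] show "Ple x z" by auto
    qed
  qed
  show ?thesis apply (rule exI[of _ "\<lambda>i. x@[i]"]) apply (rule disjI2) using H by simp
next
  case False
  hence e: "even (length x)" by simp
  have g1: "gen (x@[i]) (x@[j])" if "j < i" for i j
  proof (cases "x = []")
    case True thus ?thesis unfolding gen_def
      apply (intro disjI1)
      apply (rule exI[of _ i], rule exI[of _ j])
      using that by simp
  next
    case False thus ?thesis unfolding gen_def
      apply (intro disjI2)
      apply (rule exI[of _ x], rule exI[of _ i], rule exI[of _ j], rule exI[of _ "last x"])
      using e that by simp
  qed
  have g2: "gen x (x@[Suc i])" for i
  proof (cases "x = []")
    case True thus ?thesis unfolding gen_def
      apply (intro disjI1)
      apply (rule exI[of _ "Suc i"], rule exI[of _ 0])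
      by simp
  next
    case False
    have "gen (butlast x @ [last x]) (x@[Suc i])" unfolding gen_def
      apply (intro disjI2)
      apply (rule exI[of _ x], rule exI[of _ "Suc i"], rule exI[of _ 0], rule exI[of _ "last x"])
      using e False by simp
    thus ?thesis using False by simp
  qed
  have dn: "Ple x (x@[i])" for i
    using g1[of i "Suc i"] g2[of i] unfolding Ple_def by (meson lessI r_into_rtranclp rtranclp_trans)
  have H: "(\<forall>i j. j < i \<longrightarrow> Pless (x@[i]) (x@[j])) \<and> P_glb x (range (\<lambda>i. x@[i]))"
  proof (intro conjI allI impI)
    fix i j :: nat assume "j < i" thus "Pless (x@[i]) (x@[j])" using g1 unfolding Pless_def Ple_def by auto
  next
    show "P_glb x (range (\<lambda>i. x@[i]))" unfolding P_glb_def
    proof (intro conjI allI impI)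
      show "\<forall>a\<in>range (\<lambda>i. x @ [i]). Ple x a" using dn by auto
    next
      fix z assume a: "\<forall>a\<in>range (\<lambda>i. x @ [i]). Ple z a"
      have "Ple z (x@[Suc (z ! length x)])" using a by auto
      from even_inv[OF e this] show "Ple z x" by auto
    qed
  qed
  show ?thesis apply (rule exI[of _ "\<lambda>i. x@[i]"]) apply (rule disjI1) using H by simp
qed

end
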